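(* Let $\mu>0$ be an integer upper bound and $d>1$ a discount factor. Let $v\in\mathbb{Q}$ be a threshold value with representation $v=v[0]v[1]\dots v[m](v[m+1]v[m+2]\dots v[n])^{\omega}$. Let $W$ be a non-empty finite weight sequence over $\{-\mu,\dots,\mu\}$. Then: (1) $\mathrm{gap}(W-v[\dots|W|])>\frac1d\cdot\mathrm{DS}(v[|W|\dots],d)+\frac{\mu}{d-1}$ if and only if for all infinite extensions $Y\in\{-\mu,\dots,\mu\}^{\omega}$, $\mathrm{DS}(W\cdot Y,d)>v$; (2) $\mathrm{gap}(W-v[\dots|W|])\le\frac1d\cdot\mathrm{DS}(v[|W|\dots],d)-\frac{\mu}{d-1}$ if and only if for all infinite extensions $Y\in\{-\mu,\dots,\mu\}^{\omega}$, $\mathrm{DS}(W\cdot Y,d)\le v$.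
   Context: For a finite or infinite sequence $A=a_0a_1\dots$, $\mathrm{DS}(A,d)=\sum_i a_i/d^i$. The threshold $v$ is represented by an ultimately periodic sequence of integers $v[0]v[1]\dots v[m](v[m+1]\dots v[n])^{\omega}$ whose discounted sum with factor $d$ equals $v$; below this infinite sequence is also denoted $v$. For $i\ge0$, $v[\dots i]$ denotes the prefix of length $i$ of this infinite sequence and $v[i\dots]$ the remaining infinite suffix (starting at index $i$). For finite sequences of equal length, $W-U$ denotes their pointwise difference. The recoverable gap of a finite sequence $U$ is $\mathrm{gap}(\varepsilon)=0$ for the empty sequence and $\mathrm{gap}(U)=d^{|U|-1}\cdot\mathrm{DS}(U,d)$ otherwise. *)

theory Defs
  imports Complex_Main
begin

definition DS_fin :: "int list \<Rightarrow> real \<Rightarrow> real" where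
  "DS_fin A d = (\<Sum>i<length A. real_of_int (A ! i) / d ^ i)"

definition DS_inf :: "(nat \<Rightarrow> int) \<Rightarrow> real \<Rightarrow> real" where
  "DS_inf a d = (\<Sum>i. real_of_int (a i) / d ^ i)"

definition gap :: "int list \<Rightarrow> real \<Rightarrow> real" where
  "gap U d = (if U = [] then 0 else d ^ (length U - 1) * DS_fin U d)"

text \<open>The ultimately periodic sequence pre (per)^omega, where
  pre = v[0]..v[m] and per = v[m+1]..v[n].\<close>
definition ult_per :: "int list \<Rightarrow> int list \<Rightarrow> nat \<Rightarrow> int" where
  "ult_per pre per i =
     (if i < length pre then pre ! i else per ! ((i - length pre) mod length per))"

definition seq_prefix :: "(nat \<Rightarrow> int) \<Rightarrow> nat \<Rightarrow> int list" where
  "seq_prefix v k = map v [0..<k]"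

definition seq_suffix :: "(nat \<Rightarrow> int) \<Rightarrow> nat \<Rightarrow> nat \<Rightarrow> int" where
  "seq_suffix v k = (\<lambda>i. v (i + k))"

definition list_diff :: "int list \<Rightarrow> int list \<Rightarrow> int list" where
  "list_diff W U = map2 (\<lambda>x y. x - y) W U"

definition conc :: "int list \<Rightarrow> (nat \<Rightarrow> int) \<Rightarrow> nat \<Rightarrow> int" where
  "conc W Y = (\<lambda>i. if i < length W then W ! i else Y (i - length W))"

end

theory Submission
  imports Defs
begin

lemma summ_bd:
  fixes a :: "nat \<Rightarrow> int" and B :: int and d :: real
  assumes "d > 1" "\<forall>i. \<bar>a i\<bar> \<le> B"
  shows "summable (\<lambda>i. real_of_int (a i) / d ^ i)"
proof (rule summable_comparison_test)
  show "summable (\<lambda>i. B * (1/d) ^ i)"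
    using assms(1) by (intro summable_mult summable_geometric) auto
  show "\<exists>N. \<forall>n\<ge>N. norm (real_of_int (a n) / d ^ n) \<le> B * (1 / d) ^ n"
  proof (intro exI allI impI)
    fix n :: nat
    have "\<bar>real_of_int (a n)\<bar> \<le> B" using assms(2) by (metis of_int_abs of_int_le_iff order.trans order_refl) 
    then show "norm (real_of_int (a n) / d ^ n) \<le> B * (1 / d) ^ n"
      using assms(1) by (simp add: abs_divide power_one_over divide_right_mono)
  qed
qed

lemma DS_split:
  fixes a :: "nat \<Rightarrow> int" and B :: int and d :: real
  assumes "d > 1" "\<forall>i. \<bar>a i\<bar> \<le> B"
  shows "DS_inf a d = (\<Sum>i<k. real_of_int (a i) / d ^ i) + DS_inf (seq_suffix a k) d / d ^ k"
proof -
  have s: "summable (\<lambda>i. real_of_int (a i) / d ^ i)" using summ_bd assms by blast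
  have s2: "summable (\<lambda>i. real_of_int (a (i + k)) / d ^ i)"
    using summ_bd[of d "\<lambda>i. a (i+k)" B] assms by auto
  have "DS_inf a d = (\<Sum>i. real_of_int (a (i + k)) / d ^ (i + k)) + (\<Sum>i<k. real_of_int (a i) / d ^ i)"
    unfolding DS_inf_def by (rule suminf_split_initial_segment[OF s])
  also have "(\<lambda>i. real_of_int (a (i + k)) / d ^ (i + k)) = (\<lambda>i. real_of_int (a (i + k)) / d ^ i / d ^ k)"
    by (simp add: power_add)
  also have "(\<Sum>i. real_of_int (a (i + k)) / d ^ i / d ^ k) = (\<Sum>i. real_of_int (a (i + k)) / d ^ i) / d ^ k"
    using suminf_divide[OF s2, of "d ^ k"] by simp
  finally show ?thesis unfolding DS_inf_def seq_suffix_def by simp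
qed

lemma DS_const:
  fixes d :: real
  assumes "d > 1"
  shows "DS_inf (\<lambda>i. c) d = c * d / (d - 1)"
proof -
  have "(\<lambda>i. real_of_int c / d ^ i) = (\<lambda>i. c * (1/d) ^ i)" by (simp add: power_one_over)
  moreover have "(\<lambda>i. c * (1/d) ^ i) sums (c * (1 / (1 - 1/d)))"
    using assms by (intro sums_mult geometric_sums) auto
  moreover have "c * (1 / (1 - 1/d)) = c * d / (d - 1)" using assms by (simp add: field_simps)
  ultimately show ?thesis unfolding DS_inf_def by (metis sums_unique)
qed

lemma DS_bounds:
  fixes \<mu> :: int and d :: real
  assumes "d > 1" "\<forall>i. \<bar>Y i\<bar> \<le> \<mu>"
  shows "DS_inf Y d \<le> \<mu> * d / (d - 1)" "- (\<mu> * d / (d - 1)) \<le> DS_inf Y d"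
proof -
  have s: "summable (\<lambda>i. real_of_int (Y i) / d ^ i)" using summ_bd[of d Y \<mu>] assms by auto
  have sc: "summable (\<lambda>i. real_of_int c / d ^ i)" for c :: int
    using summ_bd[of d "\<lambda>i. c" "\<bar>c\<bar>"] assms by auto
  have "DS_inf Y d \<le> DS_inf (\<lambda>i. \<mu>) d" unfolding DS_inf_def
  proof (rule suminf_le[OF _ s sc])
    fix n have "Y n \<le> \<mu>" using assms(2) by (metis abs_le_D1)
    then show "real_of_int (Y n) / d ^ n \<le> real_of_int \<mu> / d ^ n"
      using assms(1) by (simp add: divide_right_mono)
  qed
  then show "DS_inf Y d \<le> \<mu> * d / (d - 1)" using DS_const[OF assms(1)] by simp
  have "DS_inf (\<lambda>i. - \<mu>) d \<le> DS_inf Y d" unfolding DS_inf_def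
  proof (rule suminf_le[OF _ sc s])
    fix n have "- \<mu> \<le> Y n" using assms(2) by (metis abs_le_D2 minus_le_iff)
    then have "real_of_int (- \<mu>) \<le> real_of_int (Y n)" by linarith
    then show "real_of_int (- \<mu>) / d ^ n \<le> real_of_int (Y n) / d ^ n"
      using assms(1) by (intro divide_right_mono) auto
  qed
  then show "- (\<mu> * d / (d - 1)) \<le> DS_inf Y d" using DS_const[OF assms(1), of "-\<mu>"] by simp
qed


lemma key_equiv:
  fixes d G T DY :: real and S Av Uv v :: real and k :: nat
  assumes "d > 1" "k > 0" "G = d ^ (k - 1) * S" "S = Av - Uv"
    "v = Uv + T / d ^ k" "DW = Av + DY / d ^ k"
  shows "(DW > v \<longleftrightarrow> G > (T - DY) / d)" "(DW \<le> v \<longleftrightarrow> G \<le> (T - DY) / d)"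
proof -
  define P where "P = d ^ (k - 1)"
  have P: "P > 0" using assms(1) unfolding P_def by simp
  have dk: "d ^ k = d * P" unfolding P_def using assms(2)
    by (metis Suc_diff_1 power_Suc)
  have GP: "G = P * (Av - Uv)" using assms(3,4) unfolding P_def by simp
  have "DW - v = (Av - Uv) + (DY - T) / (d * P)"
    using assms(5,6) dk by (simp add: diff_divide_distrib)
  also have "\<dots> = (d * G + DY - T) / (d * P)"
    using P assms(1) unfolding GP by (simp add: field_simps)
  finally have e: "DW - v = (d * G + DY - T) / (d * P)" .
  have dp: "d * P > 0" using P assms(1) by simp
  have "DW > v \<longleftrightarrow> DW - v > 0" by simp
  also have "\<dots> \<longleftrightarrow> d * G + DY - T > 0" unfolding e using dp by (simp add: zero_less_divide_iff)
  also have "\<dots> \<longleftrightarrow> G > (T - DY) / d" using assms(1) by (simp add: field_simps)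
  finally show "(DW > v \<longleftrightarrow> G > (T - DY) / d)" .
  then show "(DW \<le> v \<longleftrightarrow> G \<le> (T - DY) / d)" by linarith
qed

theorem lemma3:
  fixes \<mu> :: int and d :: real and v :: real
    and pre per :: "int list" and W :: "int list"
  assumes mu_pos: "\<mu> > 0"
    and d_gt: "d > 1"
    and v_rat: "v \<in> \<rat>"
    and pre_ne: "pre \<noteq> []" and per_ne: "per \<noteq> []"
    and v_rep: "DS_inf (ult_per pre per) d = v"
    and W_ne: "W \<noteq> []"
    and W_bd: "\<forall>x\<in>set W. \<bar>x\<bar> \<le> \<mu>"
  shows "(gap (list_diff W (seq_prefix (ult_per pre per) (length W))) d
            > 1 / d * DS_inf (seq_suffix (ult_per pre per) (length W)) d + \<mu> / (d - 1)
          \<longleftrightarrow> (\<forall>Y. (\<forall>i. \<bar>Y i\<bar> \<le> \<mu>) \<longrightarrow> DS_inf (conc W Y) d > v))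
       \<and> (gap (list_diff W (seq_prefix (ult_per pre per) (length W))) d
            \<le> 1 / d * DS_inf (seq_suffix (ult_per pre per) (length W)) d - \<mu> / (d - 1)
          \<longleftrightarrow> (\<forall>Y. (\<forall>i. \<bar>Y i\<bar> \<le> \<mu>) \<longrightarrow> DS_inf (conc W Y) d \<le> v))"
proof -
  define u where "u = ult_per pre per"
  define k where "k = length W"
  define B where "B = Max (abs ` set (pre @ per))"
  have kpos: "k > 0" using W_ne unfolding k_def by simp
  have ubd: "\<forall>i. \<bar>u i\<bar> \<le> B"
  proof
    fix i
    have "u i \<in> set (pre @ per)"
      unfolding u_def ult_per_def using per_ne by auto
    then show "\<bar>u i\<bar> \<le> B" unfolding B_def by simp
  qed
  define T where "T = DS_inf (seq_suffix u k) d"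
  define Uv where "Uv = (\<Sum>i<k. real_of_int (u i) / d ^ i)"
  define Av where "Av = (\<Sum>i<k. real_of_int (W ! i) / d ^ i)"
  define S where "S = Av - Uv"
  define G where "G = gap (list_diff W (seq_prefix u k)) d"
  have vrep: "v = Uv + T / d ^ k"
    using DS_split[OF d_gt ubd, of k] v_rep unfolding u_def T_def Uv_def by simp
  have ld: "length (list_diff W (seq_prefix u k)) = k"
    unfolding list_diff_def seq_prefix_def k_def by simp
  have ldn: "list_diff W (seq_prefix u k) \<noteq> []" using ld kpos by auto
  have ldi: "list_diff W (seq_prefix u k) ! i = W ! i - u i" if "i < k" for i
    using that unfolding list_diff_def seq_prefix_def k_def by simp
  have "DS_fin (list_diff W (seq_prefix u k)) d = S"
    unfolding DS_fin_def ld S_def Av_def Uv_def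
    by (simp add: ldi diff_divide_distrib sum_subtractf)
  then have Gd: "G = d ^ (k - 1) * S" unfolding G_def gap_def using ldn ld by simp
  have DW: "DS_inf (conc W Y) d = Av + DS_inf Y d / d ^ k" if Y: "\<forall>i. \<bar>Y i\<bar> \<le> \<mu>" for Y
  proof -
    have cb: "\<forall>i. \<bar>conc W Y i\<bar> \<le> \<mu>" using Y W_bd unfolding conc_def by auto
    have "seq_suffix (conc W Y) k = Y" unfolding seq_suffix_def conc_def k_def by auto
    moreover have "(\<Sum>i<k. real_of_int (conc W Y i) / d ^ i) = Av"
      unfolding Av_def conc_def k_def by simp
    ultimately show ?thesis using DS_split[OF d_gt cb, of k] by simp
  qed
  note K = key_equiv[OF d_gt kpos Gd S_def vrep DW]
  have part1: "G > 1 / d * T + \<mu> / (d - 1) \<longleftrightarrow> (\<forall>Y. (\<forall>i. \<bar>Y i\<bar> \<le> \<mu>) \<longrightarrow> DS_inf (conc W Y) d > v)"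
  proof
    assume h: "G > 1 / d * T + \<mu> / (d - 1)"
    show "\<forall>Y. (\<forall>i. \<bar>Y i\<bar> \<le> \<mu>) \<longrightarrow> DS_inf (conc W Y) d > v"
    proof (intro allI impI)
      fix Y :: "nat \<Rightarrow> int" assume Y: "\<forall>i. \<bar>Y i\<bar> \<le> \<mu>"
      have lb: "- (\<mu> * d / (d - 1)) \<le> DS_inf Y d" using DS_bounds(2)[OF d_gt Y] .
      have "(T - DS_inf Y d) / d \<le> 1 / d * T + \<mu> / (d - 1)"
      proof -
        have "(T - DS_inf Y d) / d \<le> (T + \<mu> * d / (d - 1)) / d"
          using lb d_gt by (intro divide_right_mono) auto
        also have "\<dots> = 1 / d * T + \<mu> / (d - 1)" using d_gt by (simp add: field_simps)
        finally show ?thesis .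
      qed
      then show "DS_inf (conc W Y) d > v" using K(1)[OF Y] h by linarith
    qed
  next
    assume h: "\<forall>Y. (\<forall>i. \<bar>Y i\<bar> \<le> \<mu>) \<longrightarrow> DS_inf (conc W Y) d > v"
    have Y: "\<forall>i. \<bar>(\<lambda>i. - \<mu>) i\<bar> \<le> \<mu>" using mu_pos by simp
    have "G > (T - DS_inf (\<lambda>i. - \<mu>) d) / d" using K(1)[OF Y] h[THEN spec, THEN mp, OF Y] by simp
    moreover have "(T - DS_inf (\<lambda>i. - \<mu>) d) / d = 1 / d * T + \<mu> / (d - 1)"
    proof -
      have c: "DS_inf (\<lambda>i. - \<mu>) d = - (\<mu> * d / (d - 1))" using DS_const[OF d_gt, of "-\<mu>"] by simp
      show ?thesis unfolding c using d_gt by (simp add: field_simps)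
    qed
    ultimately show "G > 1 / d * T + \<mu> / (d - 1)" by simp
  qed
  have part2: "G \<le> 1 / d * T - \<mu> / (d - 1) \<longleftrightarrow> (\<forall>Y. (\<forall>i. \<bar>Y i\<bar> \<le> \<mu>) \<longrightarrow> DS_inf (conc W Y) d \<le> v)"
  proof
    assume h: "G \<le> 1 / d * T - \<mu> / (d - 1)"
    show "\<forall>Y. (\<forall>i. \<bar>Y i\<bar> \<le> \<mu>) \<longrightarrow> DS_inf (conc W Y) d \<le> v"
    proof (intro allI impI)
      fix Y :: "nat \<Rightarrow> int" assume Y: "\<forall>i. \<bar>Y i\<bar> \<le> \<mu>"
      have ub: "DS_inf Y d \<le> \<mu> * d / (d - 1)" using DS_bounds(1)[OF d_gt Y] .
      have "1 / d * T - \<mu> / (d - 1) \<le> (T - DS_inf Y d) / d"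
      proof -
        have "1 / d * T - \<mu> / (d - 1) = (T - \<mu> * d / (d - 1)) / d" using d_gt by (simp add: field_simps)
        also have "\<dots> \<le> (T - DS_inf Y d) / d"
          using ub d_gt by (intro divide_right_mono) auto
        finally show ?thesis .
      qed
      then show "DS_inf (conc W Y) d \<le> v" using K(2)[OF Y] h by linarith
    qed
  next
    assume h: "\<forall>Y. (\<forall>i. \<bar>Y i\<bar> \<le> \<mu>) \<longrightarrow> DS_inf (conc W Y) d \<le> v"
    have Y: "\<forall>i. \<bar>(\<lambda>i. \<mu>) i\<bar> \<le> \<mu>" using mu_pos by simp
    have "G \<le> (T - DS_inf (\<lambda>i. \<mu>) d) / d" using K(2)[OF Y] h[THEN spec, THEN mp, OF Y] by simp
    moreover have "(T - DS_inf (\<lambda>i. \<mu>) d) / d = 1 / d * T - \<mu> / (d - 1)"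
    proof -
      have c: "DS_inf (\<lambda>i. \<mu>) d = \<mu> * d / (d - 1)" using DS_const[OF d_gt, of "\<mu>"] by simp
      show ?thesis unfolding c using d_gt by (simp add: field_simps)
    qed
    ultimately show "G \<le> 1 / d * T - \<mu> / (d - 1)" by simp
  qed
  show ?thesis using part1 part2 unfolding G_def T_def u_def k_def by simp
qed

end
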